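(* Assume conditions (A1)–(A7) below hold. For $\varepsilon\in\mathbb{R}$ and $a\in\mathbb{R}^d$ let $Z^{\varepsilon,a}(h)=G(h)-\tfrac12h^TVh+\varepsilon a^Th$. Then there exist positive constants $C_6,C_7,C_8,K_0$ such that $$\sup_{\|a\|_2=1,\,|\varepsilon|\le1}\Pr\Big(\sup_{h\in\mathbb{R}^d}Z^{\varepsilon,a}(h)>x\Big)\le C_6\exp(-C_7x^2)+C_8\exp(-x)\qquad\text{for all }x\ge K_0.$$ As a result, for every integer $m>0$, $\sup_{\|a\|_2=1}\sup_{|\varepsilon|\le1}\mathbb{E}\big[\{\sup_hZ^{\varepsilon,a}(h)\}^m\big]<\infty$.
   Context: Setting: $X$ is a random element of a measurable space; $\Theta\subset\mathbb{R}^d$ ($d$ fixed) compact; $m(\cdot,\theta)$ real measurable for each $\theta\in\Theta$; $\theta_0\in\Theta$ the unique maximizer of $\theta\mapsto\mathbb{E}m(X,\theta)$; $m_h=m(\cdot,\theta_0+n^{-1/3}h)-m(\cdot,\theta_0)$. $\|\cdot\|_2$ is the Euclidean norm (operator norm for matrices); $\|Y\|_{\psi_1}=\inf\{C>0:\mathbb{E}\exp(|Y|/C)\le2\}$. Conditions: (A1) There is $\delta>0$ such that on $N_\delta=\{\theta:\|\theta-\theta_0\|_2\le\delta\}$ the map $\theta\mapsto\mathbb{E}m(X,\theta)$ is twice continuously differentiable with Hessian $-V(\theta)$, $V(\theta)$ positive definite on $N_\delta$, and $\mathbb{E}m(X,\theta_0)>\sup_{\theta\in N_\delta^c}\mathbb{E}m(X,\theta)$.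 (A2) For $\theta_1,\theta_2\in N_\delta$, $\mathbb{E}|m(X,\theta_1)-m(X,\theta_2)|^2=O(\|\theta_1-\theta_2\|_2)$. (A3) There is an envelope $M\ge|m(\cdot,\theta)|$ for all $\theta$ with $\omega=\|M(X)\|_{\psi_1}<\infty$. (A4) $M_R(\cdot)=\sup\{|m(\cdot,\theta)-m(\cdot,\theta_0)|:\|\theta-\theta_0\|_2\le R\}$ satisfies $\mathbb{E}M_R(X)^2=O(R)$ for $R\le\delta$. (A5) $\{m(\cdot,\theta):\theta\in\Theta\}$ has VC index $v$ with $1\le v<\infty$. (A6) $\|V(\theta)-V\|_2=O(\|\theta-\theta_0\|_2)$ for $\theta\in N_\delta$, where $V=V(\theta_0)$. (A7) $G$ is the mean-zero Gaussian process on $\mathbb{R}^d$ with covariance $\lim_nn^{1/3}\mathbb{E}[m_{h_1}(X)m_{h_2}(X)]$ (the process in the cube-root limit $n^{1/3}(\hat\theta-\theta_0)\xrightarrow{d}\arg\max_h\{G(h)-\frac12h^TVh\}$), and $L(h)=\mathbb{E}G(h)^2$ satisfies $L(h)>0$ for $h\neq0$. (i) $L$ is symmetric ($L(-h)=L(h)$), continuous, and $L(kh)=kL(h)$ for $k>0$. (ii) For $\|h_1\|_2,\|h_2\|_2\le n^{1/3}\delta$, $\big|L(h_1-h_2)-n^{1/3}\mathbb{E}\{m(X,\theta_0+n^{-1/3}h_1)-m(X,\theta_0+n^{-1/3}h_2)\}^2\big|=O\big((\|h_1\|_2+\|h_2\|_2)^2/n^{1/3}\big)$. *)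

theory Defs
  imports "HOL-Probability.Probability"
begin

text \<open>Orlicz psi_1 norm of a real random variable Y on a probability space M:
  inf of C > 0 with E exp(abs Y / C) \<le> 2 (infimum of the empty set is \<infinity>).\<close>
definition psi1_norm :: "'w measure \<Rightarrow> ('w \<Rightarrow> real) \<Rightarrow> ereal" where
  "psi1_norm M Y = Inf {ereal C | C. C > 0 \<and>
      (\<integral>\<^sup>+ w. ennreal (exp (\<bar>Y w\<bar> / C)) \<partial>M) \<le> 2}"

definition shatters :: "'a set set \<Rightarrow> 'a set \<Rightarrow> bool" where
  "shatters C S \<longleftrightarrow> (\<forall>T\<subseteq>S. \<exists>A\<in>C. A \<inter> S = T)"

definition has_vc_index :: "'a set set \<Rightarrow> nat \<Rightarrow> bool" where
  "has_vc_index C v \<longleftrightarrow>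
     (\<forall>S. finite S \<and> card S = v \<longrightarrow> \<not> shatters C S) \<and>
     (\<forall>n<v. \<exists>S. finite S \<and> card S = n \<and> shatters C S)"

definition subgraph :: "'b set \<Rightarrow> ('b \<Rightarrow> real) \<Rightarrow> ('b \<times> real) set" where
  "subgraph D f = {(x, t). x \<in> D \<and> t < f x}"

definition fun_class_vc_index :: "'b set \<Rightarrow> ('b \<Rightarrow> real) set \<Rightarrow> nat \<Rightarrow> bool" where
  "fun_class_vc_index D F v \<longleftrightarrow> has_vc_index (subgraph D ` F) v"

definition centered_gaussian :: "'w measure \<Rightarrow> ('w \<Rightarrow> real) \<Rightarrow> real \<Rightarrow> bool" where
  "centered_gaussian P Y s \<longleftrightarrow> Y \<in> borel_measurable P \<and>
     (if s = 0 then (AE w in P. Y w = 0)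
      else s > 0 \<and> distributed P lborel Y (\<lambda>x. ennreal (normal_density 0 (sqrt s) x)))"

definition gaussian_process :: "'w measure \<Rightarrow> ('i \<Rightarrow> 'w \<Rightarrow> real) \<Rightarrow> ('i \<Rightarrow> 'i \<Rightarrow> real) \<Rightarrow> bool" where
  "gaussian_process P G K \<longleftrightarrow> (\<forall>h. G h \<in> borel_measurable P) \<and>
     (\<forall>(hs :: 'i list) (cs :: real list). length hs = length cs \<longrightarrow>
        centered_gaussian P (\<lambda>w. \<Sum>i<length hs. cs ! i * G (hs ! i) w)
          (\<Sum>i<length hs. \<Sum>j<length hs. cs ! i * cs ! j * K (hs ! i) (hs ! j)))"

end

theory Submission
  imports Defs
begin


lemma nd_bound:
  assumes s: "0 < s" and tx: "t^2 \<le> x^2"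
  shows "normal_density 0 (sqrt s) x \<le> sqrt 2 * exp (-(t^2)/(4 * s)) * normal_density 0 (sqrt (2 * s)) x"
proof -
  have e: "exp (-(x^2)/(2 * s)) = exp (-(x^2)/(4 * s)) * exp (-(x^2)/(4 * s))"
    by (simp add: exp_add[symmetric] field_simps)
  have "exp (-(x^2)/(4 * s)) \<le> exp (-(t^2)/(4 * s))" using tx s by (simp add: divide_right_mono)
  hence "exp (-(x^2)/(2 * s)) \<le> exp (-(t^2)/(4 * s)) * exp (-(x^2)/(4 * s))"
    unfolding e by (intro mult_right_mono) auto
  moreover have "sqrt (2 * pi * (2 * s)) = sqrt 2 * sqrt (2 * pi * s)"
    by (simp add: real_sqrt_mult[symmetric] mult.commute mult.left_commute)
  moreover have "\<And>z. sqrt 2 * (sqrt 2 * z) = 2 * z" by (simp add: mult.assoc[symmetric])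
  ultimately show ?thesis using s
    apply (simp add: normal_density_def field_simps real_sqrt_mult)
    by (simp add: mult.assoc[symmetric])
qed

lemma gauss_tail:
  assumes P: "prob_space P" and g: "centered_gaussian P Y s" and sw: "s \<le> w" and w: "0 < w"
    and t: "0 \<le> t"
  shows "measure P {\<omega>\<in>space P. t < \<bar>Y \<omega>\<bar>} \<le> sqrt 2 * exp (-(t^2)/(4 * w))"
proof -
  interpret prob_space P by fact
  have Ym: "Y \<in> borel_measurable P" using g by (simp add: centered_gaussian_def)
  have Sm: "{\<omega>\<in>space P. t < \<bar>Y \<omega>\<bar>} \<in> sets P" using Ym by measurable
  show ?thesis
  proof (cases "s = 0")
    case True
    hence ae: "AE \<omega> in P. Y \<omega> = 0" using g by (simp add: centered_gaussian_def)
    have "AE \<omega> in P. \<omega> \<notin> {\<omega>\<in>space P. t < \<bar>Y \<omega>\<bar>}" using ae t by (auto elim!: eventually_mono)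
    hence "measure P {\<omega>\<in>space P. t < \<bar>Y \<omega>\<bar>} = 0"
      using Sm by (simp add: AE_iff_measurable measure_def)
    thus ?thesis by simp
  next
    case False
    hence s: "0 < s" and d: "distributed P lborel Y (\<lambda>x. ennreal (normal_density 0 (sqrt s) x))"
      using g by (auto simp: centered_gaussian_def)
    let ?A = "{x::real. t < \<bar>x\<bar>}"
    have Am: "?A \<in> sets lborel" by measurable
    have eq: "Y -` ?A \<inter> space P = {\<omega>\<in>space P. t < \<bar>Y \<omega>\<bar>}" by auto
    have "emeasure P {\<omega>\<in>space P. t < \<bar>Y \<omega>\<bar>} = (\<integral>\<^sup>+x. ennreal (normal_density 0 (sqrt s) x) * indicator ?A x \<partial>lborel)"
      using distributed_emeasure[OF d Am] eq by simp
    also have "\<dots> \<le> (\<integral>\<^sup>+x. ennreal (sqrt 2 * exp (-(t^2)/(4 * s))) * ennreal (normal_density 0 (sqrt (2 * s)) x) \<partial>lborel)"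
    proof (intro nn_integral_mono)
      fix x :: real
      show "ennreal (normal_density 0 (sqrt s) x) * indicator ?A x \<le> ennreal (sqrt 2 * exp (-(t^2)/(4 * s))) * ennreal (normal_density 0 (sqrt (2 * s)) x)"
      proof (cases "t < \<bar>x\<bar>")
        case True
        hence "t^2 \<le> x^2" using t by (metis abs_le_square_iff less_imp_le abs_of_nonneg)
        from nd_bound[OF s this] show ?thesis using True
          by (simp add: ennreal_mult'[symmetric] ennreal_leI)
      qed simp
    qed
    also have "\<dots> = ennreal (sqrt 2 * exp (-(t^2)/(4 * s))) * (\<integral>\<^sup>+x. ennreal (normal_density 0 (sqrt (2 * s)) x) \<partial>lborel)"
      by (rule nn_integral_cmult) simp
    also have "(\<integral>\<^sup>+x. ennreal (normal_density 0 (sqrt (2 * s)) x) \<partial>lborel) = 1"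
      using s by (subst nn_integral_eq_integral) (auto intro!: integrable_normal_density integral_normal_density)
    finally have "emeasure P {\<omega>\<in>space P. t < \<bar>Y \<omega>\<bar>} \<le> ennreal (sqrt 2 * exp (-(t^2)/(4 * s)))" by simp
    hence "measure P {\<omega>\<in>space P. t < \<bar>Y \<omega>\<bar>} \<le> sqrt 2 * exp (-(t^2)/(4 * s))"
      by (simp add: emeasure_eq_measure ennreal_le_iff)
    also have "\<dots> \<le> sqrt 2 * exp (-(t^2)/(4 * w))"
      using s sw t by (intro mult_left_mono) (auto intro!: divide_left_mono mult_pos_pos simp: power2_eq_square)
    finally show ?thesis .
  qed
qed



lemma ev_integrable_sq:
  fixes a :: "nat \<Rightarrow> 'w \<Rightarrow> real"
  assumes lim: "(\<lambda>n. c n * (\<integral>\<omega>. (a n \<omega>)^2 \<partial>M)) \<longlonglongrightarrow> La"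
    and alt: "La > 0 \<or> (\<forall>n \<omega>. a n \<omega> = 0)"
  shows "eventually (\<lambda>n. integrable M (\<lambda>\<omega>. (a n \<omega>)^2)) sequentially"
proof (cases "La > 0")
  case True
  have "eventually (\<lambda>n. c n * (\<integral>\<omega>. (a n \<omega>)^2 \<partial>M) > 0) sequentially"
    using order_tendstoD(1)[OF lim True] .
  thus ?thesis
  proof eventually_elim
    case (elim n)
    thus ?case using not_integrable_integral_eq by fastforce
  qed
next
  case False
  with alt show ?thesis by simp
qed

lemma cross_limit:
  fixes a b :: "nat \<Rightarrow> 'w \<Rightarrow> real"
  assumes lab: "(\<lambda>n. c n * (\<integral>\<omega>. a n \<omega> * b n \<omega> \<partial>M)) \<longlonglongrightarrow> Kab"
    and la: "(\<lambda>n. c n * (\<integral>\<omega>. (a n \<omega>)^2 \<partial>M)) \<longlonglongrightarrow> La"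
    and lb: "(\<lambda>n. c n * (\<integral>\<omega>. (b n \<omega>)^2 \<partial>M)) \<longlonglongrightarrow> Lb"
    and ld: "(\<lambda>n. c n * (\<integral>\<omega>. (a n \<omega> - b n \<omega>)^2 \<partial>M)) \<longlonglongrightarrow> Ld"
    and aa: "La > 0 \<or> (\<forall>n \<omega>. a n \<omega> = 0)"
    and bb: "Lb > 0 \<or> (\<forall>n \<omega>. b n \<omega> = 0)"
    and dd: "Ld > 0 \<or> (\<forall>n \<omega>. a n \<omega> - b n \<omega> = 0)"
  shows "Kab = (La + Lb - Ld) / 2"
proof -
  have e1: "eventually (\<lambda>n. integrable M (\<lambda>\<omega>. (a n \<omega>)^2)) sequentially"
    by (rule ev_integrable_sq[OF la aa])
  have e2: "eventually (\<lambda>n. integrable M (\<lambda>\<omega>. (b n \<omega>)^2)) sequentially"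
    by (rule ev_integrable_sq[OF lb bb])
  have e3: "eventually (\<lambda>n. integrable M (\<lambda>\<omega>. (a n \<omega> - b n \<omega>)^2)) sequentially"
    by (rule ev_integrable_sq[where a="\<lambda>n \<omega>. a n \<omega> - b n \<omega>", OF ld dd])
  have ev: "eventually (\<lambda>n. c n * (\<integral>\<omega>. a n \<omega> * b n \<omega> \<partial>M) =
      (c n * (\<integral>\<omega>. (a n \<omega>)^2 \<partial>M) + c n * (\<integral>\<omega>. (b n \<omega>)^2 \<partial>M)
       - c n * (\<integral>\<omega>. (a n \<omega> - b n \<omega>)^2 \<partial>M)) / 2) sequentially"
    using e1 e2 e3
  proof eventually_elim
    case (elim n)
    have eq: "(\<lambda>\<omega>. a n \<omega> * b n \<omega>) = (\<lambda>\<omega>. ((a n \<omega>)^2 + (b n \<omega>)^2 - (a n \<omega> - b n \<omega>)^2) / 2)"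
      by (auto simp: power2_eq_square algebra_simps)
    have X: "(\<integral>\<omega>. a n \<omega> * b n \<omega> \<partial>M) = ((\<integral>\<omega>. (a n \<omega>)^2 \<partial>M) + (\<integral>\<omega>. (b n \<omega>)^2 \<partial>M)
       - (\<integral>\<omega>. (a n \<omega> - b n \<omega>)^2 \<partial>M)) / 2"
      unfolding eq using elim by (simp add: Bochner_Integration.integral_diff Bochner_Integration.integral_add)
    show ?case unfolding X by (simp add: field_simps)
  qed
  have t: "(\<lambda>n. (c n * (\<integral>\<omega>. (a n \<omega>)^2 \<partial>M) + c n * (\<integral>\<omega>. (b n \<omega>)^2 \<partial>M)
       - c n * (\<integral>\<omega>. (a n \<omega> - b n \<omega>)^2 \<partial>M)) / 2) \<longlonglongrightarrow> (La + Lb - Ld) / 2"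
    by (intro tendsto_intros la lb ld) simp
  have ev': "eventually (\<lambda>n. (c n * (\<integral>\<omega>. (a n \<omega>)^2 \<partial>M) + c n * (\<integral>\<omega>. (b n \<omega>)^2 \<partial>M)
       - c n * (\<integral>\<omega>. (a n \<omega> - b n \<omega>)^2 \<partial>M)) / 2 = c n * (\<integral>\<omega>. a n \<omega> * b n \<omega> \<partial>M)) sequentially"
    using ev by (auto elim!: eventually_mono)
  have "(\<lambda>n. c n * (\<integral>\<omega>. a n \<omega> * b n \<omega> \<partial>M)) \<longlonglongrightarrow> (La + Lb - Ld) / 2"
    by (rule Lim_transform_eventually[OF t ev'])
  thus ?thesis using lab LIMSEQ_unique by blast
qed



definition pt :: "real \<Rightarrow> nat \<Rightarrow> ('d::finite \<Rightarrow> nat) \<Rightarrow> real^'d" where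
  "pt R k j = (\<chi> i. R * (2 * real (j i) / 2^k - 1))"
definition Jset :: "nat \<Rightarrow> ('d::finite \<Rightarrow> nat) set" where
  "Jset k = {j. \<forall>i. j i \<le> 2^k}"
definition Dy :: "real \<Rightarrow> (real^'d::finite) set" where
  "Dy R = (\<Union>k. pt R k ` Jset k)"

lemma Jset_PiE: "Jset k = (PiE UNIV (\<lambda>_. {..2^k}))"
  by (auto simp: Jset_def PiE_UNIV_domain)

lemma Jset_finite: "finite (Jset k)"
  unfolding Jset_PiE by (intro finite_PiE) auto

lemma Jset_card: "card (Jset k :: ('d::finite \<Rightarrow> nat) set) = (2^k+1)^CARD('d)"
  unfolding Jset_PiE by (simp add: card_PiE)

lemma Jset_parent: "j \<in> Jset (Suc k) \<Longrightarrow> (\<lambda>i. j i div 2) \<in> Jset k"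
  by (auto simp: Jset_def) (metis div_le_mono nonzero_mult_div_cancel_left power_Suc zero_neq_numeral)

lemma Dy_countable: "countable (Dy R)"
  unfolding Dy_def by (auto intro!: countable_finite Jset_finite)

lemma pt_parent_dist:
  fixes j :: "'d::finite \<Rightarrow> nat"
  assumes "0 \<le> R"
  shows "norm (pt R (Suc k) j - pt R k (\<lambda>i. j i div 2) :: real^'d) \<le> real CARD('d) * R / 2^k"
proof -
  have c: "\<bar>(pt R (Suc k) j - pt R k (\<lambda>i. j i div 2)) $ i\<bar> \<le> R / 2^k" for i :: 'd
  proof -
    have e: "real (j i) = 2 * real (j i div 2) + real (j i mod 2)"
      by (metis div_mult_mod_eq of_nat_add of_nat_mult of_nat_numeral mult.commute)
    have m: "real (j i mod 2) \<le> 1" by simp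
    have "(pt R (Suc k) j - pt R k (\<lambda>i. j i div 2)) $ i = R * real (j i mod 2) / 2^k"
      unfolding pt_def by (simp add: e field_simps)
    thus ?thesis using assms m by (simp add: abs_mult divide_right_mono mult_left_le)
  qed
  have "norm (pt R (Suc k) j - pt R k (\<lambda>i. j i div 2)) \<le> (\<Sum>i\<in>UNIV. \<bar>(pt R (Suc k) j - pt R k (\<lambda>i. j i div 2)) $ i\<bar>)"
    by (rule norm_le_l1_cart)
  also have "\<dots> \<le> (\<Sum>i\<in>(UNIV::'d set). R / 2^k)" by (intro sum_mono c)
  finally show ?thesis by simp
qed

lemma pt0_norm:
  assumes "0 \<le> R" "j \<in> Jset 0"
  shows "norm (pt R 0 j :: real^'d) \<le> real CARD('d) * R"
proof -
  have c: "\<bar>(pt R 0 j :: real^'d) $ i\<bar> \<le> R" for i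
  proof -
    have "j i \<le> 1" using assms by (simp add: Jset_def)
    hence "j i = 0 \<or> j i = 1" by auto
    thus ?thesis using assms by (auto simp: pt_def)
  qed
  have "norm (pt R 0 j :: real^'d) \<le> (\<Sum>i\<in>UNIV. \<bar>(pt R 0 j :: real^'d) $ i\<bar>)"
    by (rule norm_le_l1_cart)
  also have "\<dots> \<le> (\<Sum>i\<in>(UNIV::'d set). R)" by (intro sum_mono c)
  finally show ?thesis by simp
qed

lemma Dy_dense:
  fixes h :: "real^'d"
  assumes R: "0 < R" and h: "norm h < R" and e: "0 < e"
  shows "\<exists>p\<in>Dy R. dist p h < e"
proof -
  obtain k :: nat where k: "real CARD('d) * (2 * R) / e < 2^k"
    using real_arch_pow[of 2 "real CARD('d) * (2 * R) / e"] by auto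
  hence k': "real CARD('d) * (2 * R) / 2^k < e" using e by (simp add: field_simps)
  define j where "j i = nat \<lfloor>(h$i + R) / (2 * R) * 2^k\<rfloor>" for i
  have hi: "\<bar>h$i\<bar> < R" for i using component_le_norm_cart[of h i] h by linarith
  have jle: "j i \<le> 2^k" for i
  proof -
    have "(h$i + R) / (2 * R) * 2^k \<le> 2^k" using hi[of i] R by (simp add: field_simps)
    hence "\<lfloor>(h$i + R) / (2 * R) * 2^k\<rfloor> \<le> 2^k" by (metis floor_mono floor_of_nat of_nat_numeral of_nat_power)
    thus ?thesis unfolding j_def by (simp add: nat_le_iff)
  qed
  have cj: "\<bar>(pt R k j - h) $ i\<bar> \<le> 2 * R / 2^k" for i
  proof -
    let ?z = "(h$i + R) / (2 * R) * 2^k"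
    have z0: "0 \<le> ?z" using hi[of i] R by (intro mult_nonneg_nonneg divide_nonneg_pos) auto
    have rj: "real (j i) = of_int \<lfloor>?z\<rfloor>" unfolding j_def using z0 by simp
    have a1: "of_int \<lfloor>?z\<rfloor> \<le> ?z" and a2: "?z < of_int \<lfloor>?z\<rfloor> + 1" by linarith+
    have zz: "2 * R * ?z / 2^k = h$i + R" using R by (simp add: field_simps)
    have b1: "2 * R * real (j i) / 2^k \<le> 2 * R * ?z / 2^k"
      using a1 R unfolding rj by (intro divide_right_mono mult_left_mono) auto
    have b2: "2 * R * ?z / 2^k < 2 * R * (real (j i) + 1) / 2^k"
      using a2 R unfolding rj by (intro divide_strict_right_mono mult_strict_left_mono) auto
    have ee: "(pt R k j - h) $ i = 2 * R * real (j i) / 2^k - R - h$i" unfolding pt_def by (simp add: field_simps)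
    have "2 * R * (real (j i) + 1) / 2^k = 2 * R * real (j i) / 2^k + 2 * R / 2^k" by (simp add: field_simps)
    with b1 b2 ee zz show ?thesis by (simp add: abs_le_iff)
  qed
  have "dist (pt R k j) h \<le> (\<Sum>i\<in>UNIV. \<bar>(pt R k j - h) $ i\<bar>)"
    unfolding dist_norm by (rule norm_le_l1_cart)
  also have "\<dots> \<le> (\<Sum>i\<in>(UNIV::'d set). 2 * R / 2^k)" by (intro sum_mono cj)
  also have "\<dots> = real CARD('d) * (2 * R) / 2^k" by simp
  finally have "dist (pt R k j) h < e" using k' by linarith
  moreover have "pt R k j \<in> Dy R" unfolding Dy_def Jset_def using jle by auto
  ultimately show ?thesis by blast
qed



lemma exp_small:
  fixes s :: real and D :: nat
  assumes "sqrt (32 * (real D + 1) * ln 2) \<le> s"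
  shows "2^D * exp (-(s^2)/32) \<le> 1/2"
proof -
  have "0 \<le> sqrt (32 * (real D + 1) * ln 2)" by simp
  hence "(sqrt (32 * (real D + 1) * ln 2))^2 \<le> s^2" using assms by (intro power_mono) auto
  hence "32 * (real D + 1) * ln 2 \<le> s^2" by simp
  hence "-(s^2)/32 \<le> real (D+1) * (- ln 2)" by (simp add: algebra_simps)
  hence "exp (-(s^2)/32) \<le> exp (real (D+1) * (- ln 2))" by simp
  also have "\<dots> = (1/2)^(D+1)" by (simp only: exp_of_nat_mult) (simp add: exp_minus inverse_eq_divide)
  finally have "2^D * exp (-(s^2)/32) \<le> 2^D * (1/2)^(D+1)" by simp
  also have "\<dots> = (2 * (1/2))^D * (1/2)" by (simp only: power_add power_one_right power_mult_distrib mult.assoc)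
  also have "\<dots> = 1/2" by simp
  finally show ?thesis .
qed

lemma exp_geom:
  fixes s :: real assumes "0 \<le> s"
  shows "exp (-(s^2 * (9/8)^k)/4) \<le> exp (-(s^2)/4) * exp (-(s^2)/32) ^ k"
proof -
  have "1 + real k * (1/8) \<le> (1 + 1/8 :: real)^k" by (rule Bernoulli_inequality) simp
  hence "s^2 * (1 + real k / 8) \<le> s^2 * (9/8)^k" by (intro mult_left_mono) auto
  hence "-(s^2 * (9/8)^k)/4 \<le> -(s^2)/4 + real k * (-(s^2)/32)" by (simp add: field_simps)
  hence "exp (-(s^2 * (9/8)^k)/4) \<le> exp (-(s^2)/4 + real k * (-(s^2)/32))" by (simp only: exp_le_cancel_iff)
  also have "\<dots> = exp (-(s^2)/4) * exp (-(s^2)/32) ^ k" by (simp only: exp_add exp_of_nat_mult)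
  finally show ?thesis .
qed

lemma chain_bound:
  fixes G :: "real^'d \<Rightarrow> 'p \<Rightarrow> real"
  assumes P: "prob_space P" and Gm: "\<And>h. G h \<in> borel_measurable P" and c0: "0 < c0"
    and inc: "\<And>p q r t. 0 < r \<Longrightarrow> norm (p - q) \<le> r \<Longrightarrow> 0 \<le> t \<Longrightarrow>
        measure P {\<omega>\<in>space P. t < \<bar>G p \<omega> - G q \<omega>\<bar>} \<le> sqrt 2 * exp (-(t^2)/(4 * (c0 * r)))"
    and sing: "\<And>p r t. 0 < r \<Longrightarrow> norm p \<le> r \<Longrightarrow> 0 \<le> t \<Longrightarrow>
        measure P {\<omega>\<in>space P. t < \<bar>G p \<omega>\<bar>} \<le> sqrt 2 * exp (-(t^2)/(4 * (c0 * r)))"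
    and R: "0 < R" and s: "sqrt (32 * (real CARD('d) + 1) * ln 2) \<le> s"
  shows "measure P {\<omega>\<in>space P. \<exists>p\<in>Dy R. 5 * s * sqrt (c0 * real CARD('d) * R) < G p \<omega>}
     \<le> sqrt 2 * (2^CARD('d) + 2 * 4^CARD('d)) * exp (-(s^2)/4)"
proof -
  interpret prob_space P by fact
  define D where "D = CARD('d)"
  define dd where "dd = real D"
  have dd1: "1 \<le> dd" unfolding dd_def D_def by simp
  define w0 where "w0 = c0 * dd * R"
  have w0: "0 < w0" unfolding w0_def using c0 dd1 R by simp
  define q where "q = sqrt w0"
  have q: "0 < q" "q^2 = w0" unfolding q_def using w0 by auto
  have "0 \<le> sqrt (32 * (real CARD('d) + 1) * ln 2)" by simp
  hence s0: "0 \<le> s" using s by linarith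
  have M1: "{\<omega>\<in>space P. t < \<bar>G p \<omega>\<bar>} \<in> sets P" for p t
    using Gm[of p] by measurable
  have M2: "{\<omega>\<in>space P. t < \<bar>G p \<omega> - G p' \<omega>\<bar>} \<in> sets P" for p p' t
    using Gm[of p] Gm[of p'] by measurable
  define tk where "tk k = s * q * (3/4)^k" for k :: nat
  define Fb where "Fb = (\<Union>j\<in>Jset 0. {\<omega>\<in>space P. s * q < \<bar>G (pt R 0 j) \<omega>\<bar>})"
  define Fk where "Fk k = (\<Union>j\<in>Jset (Suc k). {\<omega>\<in>space P. tk k < \<bar>G (pt R (Suc k) j) \<omega> - G (pt R k (\<lambda>i. j i div 2)) \<omega>\<bar>})" for k
  have Fb_m: "Fb \<in> sets P" unfolding Fb_def using Jset_finite[of 0]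
    by (intro sets.finite_UN) (auto intro!: M1 M2)
  have Fk_m: "Fk k \<in> sets P" for k unfolding Fk_def using Jset_finite[of "Suc k"]
    by (intro sets.finite_UN) (auto intro!: M1 M2)
  have "measure P Fb \<le> (\<Sum>j\<in>Jset 0. measure P {\<omega>\<in>space P. s * q < \<bar>G (pt R 0 j) \<omega>\<bar>})"
    unfolding Fb_def using Jset_finite[of 0] by (intro finite_measure_subadditive_finite) (auto intro!: M1 M2)
  also have "\<dots> \<le> (\<Sum>j\<in>(Jset 0::('d\<Rightarrow>nat) set). sqrt 2 * exp (-(s^2)/4))"
  proof (intro sum_mono)
    fix j :: "'d \<Rightarrow> nat" assume j: "j \<in> Jset 0"
    have "measure P {\<omega>\<in>space P. s * q < \<bar>G (pt R 0 j) \<omega>\<bar>} \<le> sqrt 2 * exp (-((s * q)^2)/(4 * (c0 * (dd * R))))"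
      using pt0_norm[of R j] j R dd1 s0 q unfolding dd_def D_def by (intro sing) auto
    also have "-((s * q)^2)/(4 * (c0 * (dd * R))) = -(s^2)/4"
      using q w0 c0 R dd1 unfolding w0_def by (simp add: power_mult_distrib field_simps)
    finally show "measure P {\<omega>\<in>space P. s * q < \<bar>G (pt R 0 j) \<omega>\<bar>} \<le> sqrt 2 * exp (-(s^2)/4)" by simp
  qed
  also have "\<dots> = 2^D * (sqrt 2 * exp (-(s^2)/4))" by (simp add: Jset_card D_def)
  finally have mFb: "measure P Fb \<le> 2^D * (sqrt 2 * exp (-(s^2)/4))" .
  define bk where "bk k = 4^D * (sqrt 2 * exp (-(s^2)/4)) * (1/2)^k" for k :: nat
  have mFk: "measure P (Fk k) \<le> bk k" for k
  proof -
    have "measure P (Fk k) \<le> (\<Sum>j\<in>Jset (Suc k). measure P {\<omega>\<in>space P. tk k < \<bar>G (pt R (Suc k) j) \<omega> - G (pt R k (\<lambda>i. j i div 2)) \<omega>\<bar>})"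
      unfolding Fk_def using Jset_finite[of "Suc k"] by (intro finite_measure_subadditive_finite) (auto intro!: M1 M2)
    also have "\<dots> \<le> (\<Sum>j\<in>(Jset (Suc k)::('d\<Rightarrow>nat) set). sqrt 2 * exp (-(s^2 * (9/8)^k)/4))"
    proof (intro sum_mono)
      fix j :: "'d \<Rightarrow> nat" assume j: "j \<in> Jset (Suc k)"
      have "measure P {\<omega>\<in>space P. tk k < \<bar>G (pt R (Suc k) j) \<omega> - G (pt R k (\<lambda>i. j i div 2)) \<omega>\<bar>}
          \<le> sqrt 2 * exp (-((tk k)^2)/(4 * (c0 * (dd * R / 2^k))))"
        using pt_parent_dist[of R k j] R dd1 s0 q unfolding dd_def D_def tk_def by (intro inc) auto
      also have "-((tk k)^2)/(4 * (c0 * (dd * R / 2^k))) = -(s^2 * (9/8)^k) / 4"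
      proof -
        have e34: "((3/4::real)^k)^2 = (9/16)^k" by (simp add: power2_eq_square power_mult_distrib[symmetric])
        have "(tk k)^2 = s^2 * q^2 * ((3/4)^k)^2" unfolding tk_def by (simp add: power_mult_distrib)
        hence "(tk k)^2 = s^2 * w0 * (9/16)^k" using q e34 by simp
        moreover have "(9/16::real)^k * 2^k = (9/8)^k" by (simp add: power_mult_distrib[symmetric])
        moreover have gen: "\<And>x y::real. y > 0 \<Longrightarrow> -(s^2*w0*x)/(4*(c0*(dd*R/y))) = -(s^2*(x*y))/4"
          using c0 R dd1 unfolding w0_def by (simp add: field_simps)
        ultimately show ?thesis using gen[of "2^k" "(9/16)^k"] by simp
      qed
      finally show "measure P {\<omega>\<in>space P. tk k < \<bar>G (pt R (Suc k) j) \<omega> - G (pt R k (\<lambda>i. j i div 2)) \<omega>\<bar>}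
          \<le> sqrt 2 * exp (-(s^2 * (9/8)^k)/4)" by simp
    qed
    also have "\<dots> = real ((2^Suc k + 1)^D) * (sqrt 2 * exp (-(s^2 * (9/8)^k)/4))"
      by (simp add: Jset_card D_def)
    also have "\<dots> \<le> (4^D * (2^D)^k) * (sqrt 2 * (exp (-(s^2)/4) * exp (-(s^2)/32) ^ k))"
    proof (intro mult_mono)
      have "real ((2^Suc k + 1)^D) = (2 * 2^k + 1)^D" by (simp add: add.commute)
      also have "\<dots> \<le> (4 * 2^k)^D"
      proof (intro power_mono)
        have "(1::real) \<le> 2^k" by (rule one_le_power) simp
        thus "2 * 2^k + 1 \<le> (4 * 2^k :: real)" by linarith
      next
        show "0 \<le> (2 * 2^k + 1 :: real)" by (simp add: add_nonneg_nonneg)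
      qed
      also have "\<dots> = 4^D * (2^D)^k" by (simp add: power_mult_distrib power_mult[symmetric] mult.commute)
      finally show "real ((2^Suc k + 1)^D) \<le> 4^D * (2^D)^k" .
    qed (use exp_geom[OF s0, of k] in auto)
    also have "\<dots> = 4^D * (sqrt 2 * exp (-(s^2)/4)) * (2^D * exp (-(s^2)/32))^k"
      by (simp add: power_mult_distrib)
    also have "\<dots> \<le> bk k" unfolding bk_def
      using exp_small[OF s[folded D_def]] by (intro mult_left_mono power_mono) auto
    finally show ?thesis .
  qed
  have sbk: "summable bk" unfolding bk_def by (intro summable_mult summable_geometric) simp
  have sumbk: "(\<Sum>k. bk k) = 2 * (4^D * (sqrt 2 * exp (-(s^2)/4)))"
    unfolding bk_def by (subst suminf_mult) (auto simp: suminf_geometric)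
  have mU: "measure P (\<Union>k. Fk k) \<le> 2 * (4^D * (sqrt 2 * exp (-(s^2)/4)))"
  proof -
    have sm: "summable (\<lambda>k. measure P (Fk k))"
      by (rule summable_comparison_test'[OF sbk]) (use mFk in auto)
    have "measure P (\<Union>k. Fk k) \<le> (\<Sum>k. measure P (Fk k))"
      using Fk_m sm by (intro finite_measure_subadditive_countably) auto
    also have "\<dots> \<le> (\<Sum>k. bk k)" using sm sbk mFk by (intro suminf_le) auto
    finally show ?thesis using sumbk by simp
  qed
  have sumtk: "(\<Sum>i<k. tk i) \<le> 4 * s * q" for k
  proof -
    have "(\<Sum>i<k. tk i) = s * q * (\<Sum>i<k. (3/4::real)^i)" unfolding tk_def by (simp add: sum_distrib_left)
    also have "(\<Sum>i<k. (3/4::real)^i) = 4 * (1 - (3/4)^k)" by (simp add: sum_gp_strict)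
    also have "\<dots> \<le> 4" by simp
    finally show ?thesis using s0 q by (simp add: mult_left_mono)
  qed
  have good: "\<bar>G (pt R k j) \<omega>\<bar> \<le> s * q + (\<Sum>i<k. tk i)"
    if \<omega>: "\<omega> \<in> space P" "\<omega> \<notin> Fb" "\<forall>k. \<omega> \<notin> Fk k" and j: "j \<in> Jset k" for \<omega> k j
    using j
  proof (induction k arbitrary: j)
    case 0
    thus ?case using \<omega> unfolding Fb_def by auto
  next
    case (Suc k)
    have "(\<lambda>i. j i div 2) \<in> Jset k" using Suc.prems by (rule Jset_parent)
    from Suc.IH[OF this] have ih: "\<bar>G (pt R k (\<lambda>i. j i div 2)) \<omega>\<bar> \<le> s * q + (\<Sum>i<k. tk i)" .
    have "\<bar>G (pt R (Suc k) j) \<omega> - G (pt R k (\<lambda>i. j i div 2)) \<omega>\<bar> \<le> tk k"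
      using \<omega> Suc.prems unfolding Fk_def by (auto simp: not_less)
    with ih show ?case by simp
  qed
  have sub: "{\<omega>\<in>space P. \<exists>p\<in>Dy R. 5 * s * sqrt (c0 * real CARD('d) * R) < G p \<omega>} \<subseteq> Fb \<union> (\<Union>k. Fk k)"
  proof safe
    fix \<omega> p assume \<omega>: "\<omega> \<in> space P" and p: "p \<in> Dy R" and lt: "5 * s * sqrt (c0 * real CARD('d) * R) < G p \<omega>"
      and nFk: "\<omega> \<notin> (\<Union>k. Fk k)"
    show "\<omega> \<in> Fb"
    proof (rule ccontr)
      assume "\<omega> \<notin> Fb"
      from p obtain k j where j: "j \<in> Jset k" and pe: "p = pt R k j" unfolding Dy_def by auto
      have "\<bar>G p \<omega>\<bar> \<le> s * q + (\<Sum>i<k. tk i)" unfolding pe using good[of \<omega> j k] \<omega> \<open>\<omega> \<notin> Fb\<close> nFk j by blast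
      hence "\<bar>G p \<omega>\<bar> \<le> s * q + 4 * s * q" using sumtk[of k] by linarith
      moreover have "sqrt (c0 * real CARD('d) * R) = q" unfolding q_def w0_def dd_def D_def by simp
      hence "5 * s * sqrt (c0 * real CARD('d) * R) = s * q + 4 * s * q" by simp
      ultimately show False using lt abs_ge_self[of "G p \<omega>"] by linarith
    qed
  qed
  have "measure P {\<omega>\<in>space P. \<exists>p\<in>Dy R. 5 * s * sqrt (c0 * real CARD('d) * R) < G p \<omega>} \<le> measure P (Fb \<union> (\<Union>k. Fk k))"
    using Fb_m Fk_m by (intro finite_measure_mono[OF sub]) auto
  also have "\<dots> \<le> measure P Fb + measure P (\<Union>k. Fk k)"
    using Fb_m Fk_m by (intro measure_Un_le) auto
  also have "\<dots> \<le> 2^D * (sqrt 2 * exp (-(s^2)/4)) + 2 * (4^D * (sqrt 2 * exp (-(s^2)/4)))"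
    using mFb mU by simp
  also have "\<dots> = sqrt 2 * (2^CARD('d) + 2 * 4^CARD('d)) * exp (-(s^2)/4)"
    unfolding D_def by (simp add: field_simps)
  finally show ?thesis .
qed



lemma cover:
  fixes G :: "real^'d \<Rightarrow> 'p \<Rightarrow> real"
  assumes cont: "continuous_on UNIV (\<lambda>h. G h \<omega>)" and mu: "0 \<le> \<mu>"
    and lt: "y < G h \<omega> - \<mu> * (norm h)^2"
  shows "\<exists>j::nat. \<exists>p\<in>Dy (real j + 1). y + \<mu> * (real j)^2 < G p \<omega>"
proof -
  define j where "j = nat \<lfloor>norm h\<rfloor>"
  have "real j = of_int \<lfloor>norm h\<rfloor>" unfolding j_def by simp
  hence j1: "real j \<le> norm h" and j2: "norm h < real j + 1" by linarith+
  have "(real j)^2 \<le> (norm h)^2" using j1 by (intro power_mono) auto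
  hence "\<mu> * (real j)^2 \<le> \<mu> * (norm h)^2" using mu by (rule mult_left_mono)
  hence lt2: "y + \<mu> * (real j)^2 < G h \<omega>" using lt by linarith
  have "open {p. y + \<mu> * (real j)^2 < G p \<omega>}"
    using cont by (intro open_Collect_less) (auto intro: continuous_on_const)
  then obtain e where e: "0 < e" "\<And>p. dist p h < e \<Longrightarrow> y + \<mu> * (real j)^2 < G p \<omega>"
    using lt2 unfolding open_dist by (metis (no_types, lifting) dist_commute mem_Collect_eq)
  obtain p where "p \<in> Dy (real j + 1)" "dist p h < e"
    using Dy_dense[of "real j + 1" h e] j2 e by auto
  thus ?thesis using e by blast
qed

lemma peel:
  fixes G :: "real^'d \<Rightarrow> 'p \<Rightarrow> real"
  assumes P: "prob_space P" and Gm: "\<And>h. G h \<in> borel_measurable P"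
    and mu: "0 < \<mu>" and beta: "0 < \<beta>" and K1: "0 < K1" and A0: "0 \<le> A0"
    and cube: "\<And>R T. 0 < R \<Longrightarrow> K1 * sqrt R \<le> T \<Longrightarrow>
        measure P {\<omega>\<in>space P. \<exists>p\<in>Dy R. T < G p \<omega>} \<le> A0 * exp (-(T^2)/(\<beta> * R))"
  shows "\<exists>y0. \<forall>y\<ge>y0. measure P (\<Union>j::nat. {\<omega>\<in>space P. \<exists>p\<in>Dy (real j + 1). y + \<mu> * (real j)^2 < G p \<omega>})
      \<le> A0 / (1 - exp (-\<mu>)) * exp (-y)"
proof -
  interpret prob_space P by fact
  define Km where "Km = max K1 \<beta>"
  have Km: "0 < Km" "K1 \<le> Km" "\<beta> \<le> Km" unfolding Km_def using K1 by auto
  define y0 where "y0 = Km + Km^2 / (4 * \<mu>)"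
  have "measure P (\<Union>j::nat. {\<omega>\<in>space P. \<exists>p\<in>Dy (real j + 1). y + \<mu> * (real j)^2 < G p \<omega>})
      \<le> A0 / (1 - exp (-\<mu>)) * exp (-y)" if y: "y0 \<le> y" for y
  proof -
    define Aj where "Aj j = {\<omega>\<in>space P. \<exists>p\<in>Dy (real j + 1). y + \<mu> * (real j)^2 < G p \<omega>}" for j :: nat
    define bj where "bj j = A0 * exp (-y) * exp (-\<mu>) ^ j" for j :: nat
    have M1: "{\<omega>\<in>space P. t < G p \<omega>} \<in> sets P" for p t
      using Gm[of p] by measurable
    have Aj_m: "Aj j \<in> sets P" for j
    proof -
      have "Aj j = (\<Union>p\<in>Dy (real j + 1). {\<omega>\<in>space P. y + \<mu> * (real j)^2 < G p \<omega>})"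
        unfolding Aj_def by auto
      also have "\<dots> \<in> sets P"
        using Dy_countable by (intro sets.countable_UN') (auto intro!: M1)
      finally show ?thesis .
    qed
    have mA: "measure P (Aj j) \<le> bj j" for j
    proof -
      define T where "T = y + \<mu> * (real j)^2"
      have sq: "0 \<le> \<mu> * (real j - Km / (2 * \<mu>))^2" using mu by simp
      have "Km * (real j + 1) \<le> T"
      proof -
        have "\<mu> * (real j - Km / (2 * \<mu>))^2 = \<mu> * (real j)^2 - Km * real j + Km^2 / (4 * \<mu>)"
          using mu by (simp add: power2_eq_square field_simps)
        thus ?thesis using sq y unfolding T_def y0_def by (simp add: algebra_simps)
      qed
      hence TK: "Km * (real j + 1) \<le> T" .
      have T0: "0 < T" using TK Km by (smt (verit) mult_pos_pos of_nat_0_le_iff)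
      have "real j + 1 \<le> (real j + 1)^2" by (simp add: power2_eq_square)
      hence "sqrt (real j + 1) \<le> sqrt ((real j + 1)^2)" by (rule real_sqrt_le_mono)
      hence "sqrt (real j + 1) \<le> real j + 1" by simp
      hence "K1 * sqrt (real j + 1) \<le> Km * (real j + 1)" using Km K1 by (intro mult_mono) auto
      hence c: "measure P (Aj j) \<le> A0 * exp (-(T^2)/(\<beta> * (real j + 1)))"
        using cube[of "real j + 1" T] TK unfolding Aj_def T_def by simp
      have "\<beta> * (real j + 1) \<le> T" using TK Km by (smt (verit) mult_right_mono of_nat_0_le_iff)
      hence "T * (\<beta> * (real j + 1)) \<le> T * T" using T0 by (intro mult_left_mono) auto
      moreover have pos: "0 < \<beta> * (real j + 1)" using beta by simp
      ultimately have "T \<le> T^2 / (\<beta> * (real j + 1))" by (simp add: pos_le_divide_eq power2_eq_square)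
      moreover have "y + \<mu> * real j \<le> T"
      proof -
        have "real j \<le> (real j)^2" by (cases j) (auto simp: power2_eq_square)
        thus ?thesis unfolding T_def using mu by (simp add: mult_left_mono)
      qed
      ultimately have "-(T^2)/(\<beta> * (real j + 1)) \<le> -y + real j * (-\<mu>)" by (simp add: algebra_simps)
      hence "exp (-(T^2)/(\<beta> * (real j + 1))) \<le> exp (-y + real j * (-\<mu>))" by (simp only: exp_le_cancel_iff)
      also have "\<dots> = exp (-y) * exp (-\<mu>) ^ j" by (simp only: exp_add exp_of_nat_mult)
      finally show ?thesis using c A0 unfolding bj_def by (smt (verit) mult_left_mono mult.assoc)
    qed
    have e1: "exp (-\<mu>) < 1" using mu by simp
    have sbj: "summable bj" unfolding bj_def using e1 by (intro summable_mult summable_geometric) simp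
    have sm: "summable (\<lambda>j. measure P (Aj j))"
      by (rule summable_comparison_test'[OF sbj]) (use mA in auto)
    have "measure P (\<Union>j. Aj j) \<le> (\<Sum>j. measure P (Aj j))"
      using Aj_m sm by (intro finite_measure_subadditive_countably) auto
    also have "\<dots> \<le> (\<Sum>j. bj j)" using sm sbj mA by (intro suminf_le) auto
    also have "(\<Sum>j. bj j) = A0 * exp (-y) * (1 / (1 - exp (-\<mu>)))"
      unfolding bj_def using e1 by (subst suminf_mult) (auto simp: suminf_geometric)
    finally show ?thesis unfolding Aj_def by (simp add: field_simps)
  qed
  thus ?thesis by blast
qed


theorem lemma2:
  fixes M :: "'w measure" and N :: "'b measure" and X :: "'w \<Rightarrow> 'b"
    and \<Theta> :: "(real ^ 'd) set" and m :: "'b \<Rightarrow> real ^ 'd \<Rightarrow> real"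
    and \<theta>0 :: "real ^ 'd" and \<delta> :: real
    and grad :: "real ^ 'd \<Rightarrow> real ^ 'd" and Vf :: "real ^ 'd \<Rightarrow> real ^ 'd ^ 'd"
    and Menv :: "'b \<Rightarrow> real" and v :: nat
    and P :: "'p measure" and G :: "real ^ 'd \<Rightarrow> 'p \<Rightarrow> real"
    and K :: "real ^ 'd \<Rightarrow> real ^ 'd \<Rightarrow> real"
  defines "Em \<equiv> (\<lambda>\<theta>. \<integral>\<omega>. m (X \<omega>) \<theta> \<partial>M)"
    and "Nd \<equiv> cball \<theta>0 \<delta>"
    and "V \<equiv> Vf \<theta>0"
    and "mh \<equiv> (\<lambda>(n::nat) h x. m x (\<theta>0 + (real n powr (-1/3)) *\<^sub>R h) - m x \<theta>0)"
    and "L \<equiv> (\<lambda>h. K h h)"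
  assumes probM: "prob_space M"
    and X_meas: "X \<in> measurable M N"
    and Theta_compact: "compact \<Theta>"
    and m_meas: "\<forall>\<theta>\<in>\<Theta>. (\<lambda>x. m x \<theta>) \<in> borel_measurable N"
    and theta0_in: "\<theta>0 \<in> \<Theta>"
    and theta0_unique_max: "\<forall>\<theta>\<in>\<Theta>. \<theta> \<noteq> \<theta>0 \<longrightarrow> Em \<theta> < Em \<theta>0"
    \<comment> \<open>(A1)\<close>
    and delta_pos: "\<delta> > 0"
    and A1_grad: "\<forall>\<theta>\<in>Nd. (Em has_derivative (\<lambda>u. grad \<theta> \<bullet> u)) (at \<theta> within Nd)"
    and A1_hess: "\<forall>\<theta>\<in>Nd. (grad has_derivative (\<lambda>u. - (Vf \<theta> *v u))) (at \<theta> within Nd)"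
    and A1_cont: "continuous_on Nd Vf"
    and A1_posdef: "\<forall>\<theta>\<in>Nd. \<forall>u. u \<noteq> 0 \<longrightarrow> u \<bullet> (Vf \<theta> *v u) > 0"
    and A1_sep: "\<exists>c. c < Em \<theta>0 \<and> (\<forall>\<theta>\<in>\<Theta> - Nd. Em \<theta> \<le> c)"
    \<comment> \<open>(A2)\<close>
    and A2: "\<exists>C. \<forall>\<theta>1\<in>Nd. \<forall>\<theta>2\<in>Nd.
               (\<integral>\<omega>. (m (X \<omega>) \<theta>1 - m (X \<omega>) \<theta>2)\<^sup>2 \<partial>M) \<le> C * norm (\<theta>1 - \<theta>2)"
    \<comment> \<open>(A3)\<close>
    and A3_meas: "Menv \<in> borel_measurable N"
    and A3_env: "\<forall>\<theta>\<in>\<Theta>. \<forall>x\<in>space N. \<bar>m x \<theta>\<bar> \<le> Menv x"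
    and A3_psi1: "psi1_norm M (\<lambda>\<omega>. Menv (X \<omega>)) < \<infinity>"
    \<comment> \<open>(A4)\<close>
    and A4: "\<exists>C. \<forall>R. 0 \<le> R \<and> R \<le> \<delta> \<longrightarrow>
               (\<integral>\<^sup>+ \<omega>. (e2ennreal (SUP \<theta>\<in>cball \<theta>0 R. ereal \<bar>m (X \<omega>) \<theta> - m (X \<omega>) \<theta>0\<bar>))\<^sup>2 \<partial>M)
                 \<le> ennreal (C * R)"
    \<comment> \<open>(A5)\<close>
    and A5: "1 \<le> v" "fun_class_vc_index (space N) ((\<lambda>\<theta>. \<lambda>x. m x \<theta>) ` \<Theta>) v"
    \<comment> \<open>(A6)\<close>
    and A6: "\<exists>C. \<forall>\<theta>\<in>Nd. onorm (\<lambda>u. (Vf \<theta> - V) *v u) \<le> C * norm (\<theta> - \<theta>0)"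
    \<comment> \<open>(A7)\<close>
    and probP: "prob_space P"
    and K_limit: "\<forall>h1 h2. (\<lambda>n. real n powr (1/3) * (\<integral>\<omega>. mh n h1 (X \<omega>) * mh n h2 (X \<omega>) \<partial>M))
                     \<longlonglongrightarrow> K h1 h2"
    and G_gauss: "gaussian_process P G K"
    and G_cont: "\<forall>\<omega>\<in>space P. continuous_on UNIV (\<lambda>h. G h \<omega>)"
    and L_pos: "\<forall>h. h \<noteq> 0 \<longrightarrow> L h > 0"
    and L_sym: "\<forall>h. L (- h) = L h"
    and L_cont: "continuous_on UNIV L"
    and L_hom: "\<forall>k h. k > 0 \<longrightarrow> L (k *\<^sub>R h) = k * L h"
    and L_approx: "\<exists>C. \<forall>n::nat. n \<ge> 1 \<longrightarrow> (\<forall>h1 h2.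
               norm h1 \<le> real n powr (1/3) * \<delta> \<and> norm h2 \<le> real n powr (1/3) * \<delta> \<longrightarrow>
               \<bar>L (h1 - h2) - real n powr (1/3) *
                   (\<integral>\<omega>. (m (X \<omega>) (\<theta>0 + (real n powr (-1/3)) *\<^sub>R h1)
                          - m (X \<omega>) (\<theta>0 + (real n powr (-1/3)) *\<^sub>R h2))\<^sup>2 \<partial>M)\<bar>
                 \<le> C * (norm h1 + norm h2)\<^sup>2 / real n powr (1/3))"
  shows "\<exists>C6 C7 C8 K0. C6 > 0 \<and> C7 > 0 \<and> C8 > 0 \<and> K0 > 0 \<and>
           (\<forall>x\<ge>K0. (SUP a\<in>sphere 0 1. SUP \<epsilon>\<in>{-1..1::real}.
              measure P {\<omega>\<in>space P.
                 (SUP h. ereal (G h \<omega> - (1/2) * (h \<bullet> (V *v h)) + \<epsilon> * (a \<bullet> h))) > ereal x})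
              \<le> C6 * exp (- C7 * x\<^sup>2) + C8 * exp (- x))
         \<and> (\<forall>k::nat. k > 0 \<longrightarrow>
              (SUP a\<in>sphere 0 1. SUP \<epsilon>\<in>{-1..1::real}.
                 \<integral>\<^sup>+ \<omega>. (e2ennreal (SUP h. ereal (G h \<omega> - (1/2) * (h \<bullet> (V *v h)) + \<epsilon> * (a \<bullet> h)))) ^ k \<partial>P)
              < \<infinity>)"
  proof -
  interpret P: prob_space P by (rule probP)
  have Gm: "\<And>h. G h \<in> borel_measurable P" using G_gauss by (simp add: gaussian_process_def)
  have GP: "\<And>hs cs. length hs = length cs \<Longrightarrow> centered_gaussian P (\<lambda>w. \<Sum>i<length hs. cs!i * G (hs!i) w)
      (\<Sum>i<length hs. \<Sum>j<length hs. cs!i * cs!j * K (hs!i) (hs!j))"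
    using G_gauss by (simp add: gaussian_process_def)
  have G1: "centered_gaussian P (G p) (L p)" for p
    using GP[of "[p]" "[1]"] by (simp add: L_def)
  have L0: "L 0 = 0" using L_hom[rule_format, of 2 0] by simp
  have Lnn: "0 \<le> L h" for h using L_pos L0 by (cases "h = 0") (auto intro: less_imp_le)
  obtain c0 where c0: "0 < c0" "\<And>h. L h \<le> c0 * norm h"
  proof -
    have "compact (L ` sphere 0 1)" using L_cont
      by (intro compact_continuous_image) (auto intro: continuous_on_subset)
    then obtain B where B: "\<And>u. u \<in> sphere (0::real^'d) 1 \<Longrightarrow> \<bar>L u\<bar> \<le> B"
      using compact_imp_bounded bounded_real by (metis image_eqI)
    define c where "c = max 1 B"
    have "L h \<le> c * norm h" for h
    proof (cases "h = 0")
      case True thus ?thesis using L0 by simp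
    next
      case False
      hence n: "0 < norm h" by simp
      have "L h = L (norm h *\<^sub>R (inverse (norm h) *\<^sub>R h))" using n by simp
      also have "\<dots> = norm h * L (inverse (norm h) *\<^sub>R h)" using L_hom n by blast
      also have "\<dots> \<le> norm h * c"
        using B[of "inverse (norm h) *\<^sub>R h"] n unfolding c_def
        by (intro mult_left_mono) (auto simp: norm_inverse)
      finally show ?thesis by (simp add: mult.commute)
    qed
    moreover have "0 < c" unfolding c_def by simp
    ultimately show ?thesis using that by blast
  qed
  have cpow: "filterlim (\<lambda>n. real n powr (1/3)) at_top sequentially"
  proof -
    have t: "(\<lambda>n. real n powr (- (1/3))) \<longlonglongrightarrow> 0"
      by (rule tendsto_neg_powr) (auto simp: filterlim_real_sequentially)
    have "eventually (\<lambda>n. 0 < real n powr (- (1/3))) sequentially"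
      using eventually_gt_at_top[of 0] by (auto elim!: eventually_mono)
    from filterlim_inverse_at_top[OF t this]
    show ?thesis by (simp add: powr_minus)
  qed
  have LD: "(\<lambda>n. real n powr (1/3) * (\<integral>\<omega>. (mh n p (X \<omega>) - mh n q (X \<omega>))^2 \<partial>M)) \<longlonglongrightarrow> L (p - q)" for p q
  proof -
    obtain C where C: "\<And>n h1 h2. n \<ge> 1 \<Longrightarrow> norm h1 \<le> real n powr (1/3) * \<delta> \<Longrightarrow> norm h2 \<le> real n powr (1/3) * \<delta> \<Longrightarrow>
               \<bar>L (h1 - h2) - real n powr (1/3) *
                   (\<integral>\<omega>. (m (X \<omega>) (\<theta>0 + (real n powr (-1/3)) *\<^sub>R h1)
                          - m (X \<omega>) (\<theta>0 + (real n powr (-1/3)) *\<^sub>R h2))\<^sup>2 \<partial>M)\<bar>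
                 \<le> C * (norm h1 + norm h2)\<^sup>2 / real n powr (1/3)"
      using L_approx by blast
    have ev1: "eventually (\<lambda>n. norm p / \<delta> \<le> real n powr (1/3)) sequentially"
      using cpow by (simp add: filterlim_at_top)
    have ev2: "eventually (\<lambda>n. norm q / \<delta> \<le> real n powr (1/3)) sequentially"
      using cpow by (simp add: filterlim_at_top)
    have ev: "eventually (\<lambda>n. norm (real n powr (1/3) * (\<integral>\<omega>. (mh n p (X \<omega>) - mh n q (X \<omega>))^2 \<partial>M) - L (p - q))
        \<le> C * (norm p + norm q)\<^sup>2 / real n powr (1/3)) sequentially"
      using ev1 ev2 eventually_ge_at_top[of 1]
    proof eventually_elim
      case (elim n)
      have "norm p \<le> real n powr (1/3) * \<delta>" "norm q \<le> real n powr (1/3) * \<delta>"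
        using elim delta_pos by (auto simp: field_simps)
      from C[OF elim(3) this] show ?case unfolding mh_def by (simp add: abs_minus_commute)
    qed
    have "(\<lambda>n. C * (norm p + norm q)\<^sup>2 / real n powr (1/3)) \<longlonglongrightarrow> 0"
      by (intro tendsto_divide_0[OF tendsto_const] filterlim_at_top_imp_at_infinity cpow)
    hence "(\<lambda>n. real n powr (1/3) * (\<integral>\<omega>. (mh n p (X \<omega>) - mh n q (X \<omega>))^2 \<partial>M) - L (p - q)) \<longlonglongrightarrow> 0"
      by (rule Lim_null_comparison[OF ev])
    from tendsto_add[OF this tendsto_const[of "L (p - q)"]] show ?thesis by simp
  qed
  have Kpq: "K p q = (L p + L q - L (p - q)) / 2" for p q
  proof (rule cross_limit[where M=M and c="\<lambda>n. real n powr (1/3)"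
        and a="\<lambda>n \<omega>. mh n p (X \<omega>)" and b="\<lambda>n \<omega>. mh n q (X \<omega>)"])
    show "(\<lambda>n. real n powr (1/3) * (\<integral>\<omega>. mh n p (X \<omega>) * mh n q (X \<omega>) \<partial>M)) \<longlonglongrightarrow> K p q"
      using K_limit by blast
    show "(\<lambda>n. real n powr (1/3) * (\<integral>\<omega>. (mh n p (X \<omega>))^2 \<partial>M)) \<longlonglongrightarrow> L p"
      using K_limit unfolding L_def by (simp add: power2_eq_square)
    show "(\<lambda>n. real n powr (1/3) * (\<integral>\<omega>. (mh n q (X \<omega>))^2 \<partial>M)) \<longlonglongrightarrow> L q"
      using K_limit unfolding L_def by (simp add: power2_eq_square)
    show "(\<lambda>n. real n powr (1/3) * (\<integral>\<omega>. (mh n p (X \<omega>) - mh n q (X \<omega>))^2 \<partial>M)) \<longlonglongrightarrow> L (p - q)"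
      by (rule LD)
    show "L p > 0 \<or> (\<forall>n \<omega>. mh n p (X \<omega>) = 0)"
      using L_pos by (cases "p = 0") (auto simp: mh_def)
    show "L q > 0 \<or> (\<forall>n \<omega>. mh n q (X \<omega>) = 0)"
      using L_pos by (cases "q = 0") (auto simp: mh_def)
    show "L (p - q) > 0 \<or> (\<forall>n \<omega>. mh n p (X \<omega>) - mh n q (X \<omega>) = 0)"
      using L_pos by (cases "p = q") auto
  qed
  have G2: "centered_gaussian P (\<lambda>w. G p w - G q w) (L (p - q))" for p q
  proof -
    have g: "centered_gaussian P (\<lambda>w. G p w - G q w) (K q q - K q p + (K p p - K p q))"
      using GP[of "[p, q]" "[1, -1]"] by (simp add: numeral_2_eq_2 lessThan_Suc)
    have "L (q - p) = L (p - q)" using L_sym[rule_format, of "p - q"] by simp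
    hence "K q q - K q p + (K p p - K p q) = L (p - q)"
      unfolding Kpq[of p q] Kpq[of q p] by (simp add: L_def field_simps)
    thus ?thesis using g by simp
  qed
  have inc: "measure P {\<omega>\<in>space P. t < \<bar>G p \<omega> - G q \<omega>\<bar>} \<le> sqrt 2 * exp (-(t^2)/(4 * (c0 * r)))"
    if "0 < r" "norm (p - q) \<le> r" "0 \<le> t" for p q r t
  proof (rule gauss_tail[OF probP G2[of p q]])
    show "L (p - q) \<le> c0 * r" using c0 that order_trans[OF c0(2) mult_left_mono[of "norm (p - q)" r c0]] by auto
  qed (use that c0 in auto)
  have sing: "measure P {\<omega>\<in>space P. t < \<bar>G p \<omega>\<bar>} \<le> sqrt 2 * exp (-(t^2)/(4 * (c0 * r)))"
    if "0 < r" "norm p \<le> r" "0 \<le> t" for p r t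
  proof (rule gauss_tail[OF probP G1[of p]])
    show "L p \<le> c0 * r" using c0 that order_trans[OF c0(2) mult_left_mono[of "norm p" r c0]] by auto
  qed (use that c0 in auto)
  define s0 where "s0 = sqrt (32 * (real CARD('d) + 1) * ln 2)"
  define A0 where "A0 = sqrt 2 * (2^CARD('d) + 2 * 4^CARD('d))"
  define \<beta> where "\<beta> = 100 * c0 * real CARD('d)"
  define K1 where "K1 = 5 * s0 * sqrt (c0 * real CARD('d)) + 1"
  have s0: "0 \<le> s0" unfolding s0_def by simp
  have A0: "0 \<le> A0" unfolding A0_def by simp
  have \<beta>: "0 < \<beta>" unfolding \<beta>_def using c0 by simp
  have K1: "0 < K1" unfolding K1_def using s0 c0 by (simp add: add_nonneg_pos)
  have cube: "measure P {\<omega>\<in>space P. \<exists>p\<in>Dy R. T < G p \<omega>} \<le> A0 * exp (-(T^2)/(\<beta> * R))"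
    if R: "0 < R" and T: "K1 * sqrt R \<le> T" for R T
  proof -
    define w where "w = sqrt (c0 * real CARD('d) * R)"
    have w: "0 < w" unfolding w_def using c0 R by simp
    have ww: "w = sqrt (c0 * real CARD('d)) * sqrt R" unfolding w_def by (simp add: real_sqrt_mult)
    define s where "s = T / (5 * w)"
    have sw: "5 * s * w = T" unfolding s_def using w by simp
    have "5 * s0 * w \<le> K1 * sqrt R" unfolding ww K1_def using R by (simp add: algebra_simps)
    hence "5 * s0 * w \<le> 5 * s * w" using T sw by linarith
    hence ss: "s0 \<le> s" using w by simp
    have cb: "measure P {\<omega>\<in>space P. \<exists>p\<in>Dy R. 5 * s * sqrt (c0 * real CARD('d) * R) < G p \<omega>}
     \<le> sqrt 2 * (2^CARD('d) + 2 * 4^CARD('d)) * exp (-(s^2)/4)"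
      by (rule chain_bound[OF probP Gm c0(1) inc sing R ss[unfolded s0_def]])
    have "w^2 = c0 * real CARD('d) * R" unfolding w_def using c0 R by simp
    hence "-(s^2)/4 = -(T^2)/(\<beta> * R)" unfolding s_def \<beta>_def using w R c0
      by (simp add: power_divide field_simps power2_eq_square)
    thus ?thesis using cb unfolding A0_def w_def[symmetric] sw by simp
  qed
  have \<theta>0Nd: "\<theta>0 \<in> Nd" unfolding Nd_def using delta_pos by simp
  have Vpos: "u \<noteq> 0 \<Longrightarrow> 0 < u \<bullet> (V *v u)" for u using A1_posdef \<theta>0Nd unfolding V_def by blast
  obtain lam where lam: "0 < lam" "\<And>h. lam * (norm h)^2 \<le> h \<bullet> (V *v h)"
  proof -
    have cV: "continuous_on UNIV (\<lambda>u::real^'d. V *v u)"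
      by (rule linear_continuous_on) (rule matrix_vector_mul_bounded_linear)
    have cf: "continuous_on (sphere 0 1) (\<lambda>u::real^'d. u \<bullet> (V *v u))"
      by (intro continuous_on_inner continuous_on_id continuous_on_subset[OF cV]) auto
    obtain u0 where u0: "u0 \<in> sphere (0::real^'d) 1" "\<And>y. y \<in> sphere 0 1 \<Longrightarrow> u0 \<bullet> (V *v u0) \<le> y \<bullet> (V *v y)"
      using continuous_attains_inf[OF compact_sphere _ cf] by auto
    have "u0 \<noteq> 0" using u0(1) by (metis norm_zero zero_neq_one mem_sphere_0)
    hence l0: "0 < u0 \<bullet> (V *v u0)" using Vpos[of u0] by auto
    have "u0 \<bullet> (V *v u0) * (norm h)^2 \<le> h \<bullet> (V *v h)" for h
    proof (cases "h = 0")
      case True thus ?thesis by simp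
    next
      case False
      define u where "u = inverse (norm h) *\<^sub>R h"
      have u: "u \<in> sphere 0 1" unfolding u_def using False by (simp add: norm_inverse)
      have hu: "h = norm h *\<^sub>R u" unfolding u_def using False by simp
      have "h \<bullet> (V *v h) = (norm h)^2 * (u \<bullet> (V *v u))"
        by (subst (1 2) hu) (simp add: matrix_vector_mult_scaleR power2_eq_square)
      moreover have "u0 \<bullet> (V *v u0) * (norm h)^2 \<le> (u \<bullet> (V *v u)) * (norm h)^2"
        using u0(2)[OF u] by (rule mult_right_mono) simp
      ultimately show ?thesis by (simp add: mult.commute)
    qed
    thus ?thesis using that l0 by blast
  qed
  define \<mu> where "\<mu> = lam / 4"
  have \<mu>: "0 < \<mu>" unfolding \<mu>_def using lam by simp
  define U where "U y = (\<Union>j::nat. {\<omega>\<in>space P. \<exists>p\<in>Dy (real j + 1). y + \<mu> * (real j)^2 < G p \<omega>})" for y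
  obtain y0 where y0: "\<And>y. y0 \<le> y \<Longrightarrow> measure P (U y) \<le> A0 / (1 - exp (-\<mu>)) * exp (-y)"
    using peel[OF probP Gm \<mu> \<beta> K1 A0 cube] unfolding U_def by blast
  have M1: "{\<omega>\<in>space P. t < G p \<omega>} \<in> sets P" for p t
    using Gm[of p] by measurable
  have U_m: "U y \<in> sets P" for y
  proof -
    have "U y = (\<Union>j. \<Union>p\<in>Dy (real j + 1). {\<omega>\<in>space P. y + \<mu> * (real j)^2 < G p \<omega>})"
      unfolding U_def by auto
    also have "\<dots> \<in> sets P"
      using Dy_countable by (intro sets.countable_UN' sets.countable_UN) (auto intro!: M1)
    finally show ?thesis .
  qed
  define A1 where "A1 = A0 / (1 - exp (-\<mu>))"
  have A1: "0 \<le> A1" unfolding A1_def using A0 \<mu> by simp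
  have red: "\<omega> \<in> U (x - 1/lam)"
    if a: "a \<in> sphere 0 1" and e: "\<epsilon> \<in> {-1..1::real}" and \<omega>: "\<omega> \<in> space P"
      and lt: "ereal x < (SUP h. ereal (G h \<omega> - (1/2) * (h \<bullet> (V *v h)) + \<epsilon> * (a \<bullet> h)))"
    for a \<epsilon> \<omega> x
  proof -
    obtain h where h: "x < G h \<omega> - (1/2) * (h \<bullet> (V *v h)) + \<epsilon> * (a \<bullet> h)"
      using lt by (auto simp: less_SUP_iff)
    have b1: "- ((1/2) * (h \<bullet> (V *v h))) \<le> - (lam/2 * (norm h)^2)" using lam(2)[of h] by simp
    have "\<epsilon> * (a \<bullet> h) \<le> \<bar>\<epsilon>\<bar> * \<bar>a \<bullet> h\<bar>" by (simp add: abs_mult[symmetric])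
    also have "\<dots> \<le> 1 * (norm a * norm h)"
      using e Cauchy_Schwarz_ineq2[of a h] by (intro mult_mono) auto
    finally have b2: "\<epsilon> * (a \<bullet> h) \<le> norm h" using a by simp
    have "0 \<le> (lam * norm h - 2)^2" by simp
    hence "4 * lam * norm h \<le> lam^2 * (norm h)^2 + 4" by (simp add: power2_eq_square algebra_simps)
    hence b3: "norm h \<le> lam / 4 * (norm h)^2 + 1 / lam" using lam(1) by (simp add: field_simps power2_eq_square)
    have "x - 1/lam < G h \<omega> - \<mu> * (norm h)^2" using h b1 b2 b3 unfolding \<mu>_def by simp
    moreover have "continuous_on UNIV (\<lambda>h. G h \<omega>)" using G_cont \<omega> by blast
    ultimately obtain j p where "p \<in> Dy (real j + 1)" "x - 1/lam + \<mu> * (real j)^2 < G p \<omega>"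
      using cover[of G \<omega> \<mu> "x - 1/lam" h] \<mu> by auto
    thus ?thesis unfolding U_def using \<omega> by blast
  qed
  define C8 where "C8 = A1 * exp (1/lam) + 1"
  define K0 where "K0 = max y0 0 + 1/lam + 1"
  have part1: "\<forall>x\<ge>K0. (SUP a\<in>sphere 0 1. SUP \<epsilon>\<in>{-1..1::real}.
              measure P {\<omega>\<in>space P.
                 (SUP h. ereal (G h \<omega> - (1/2) * (h \<bullet> (V *v h)) + \<epsilon> * (a \<bullet> h))) > ereal x})
              \<le> 1 * exp (- 1 * x\<^sup>2) + C8 * exp (- x)"
  proof (intro allI impI)
    fix x assume x: "K0 \<le> x"
    have yx: "y0 \<le> x - 1/lam" using x unfolding K0_def by simp
    have bd: "measure P {\<omega>\<in>space P. (SUP h. ereal (G h \<omega> - (1/2) * (h \<bullet> (V *v h)) + \<epsilon> * (a \<bullet> h))) > ereal x}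
        \<le> 1 * exp (- 1 * x\<^sup>2) + C8 * exp (- x)" if a: "a \<in> sphere 0 1" and e: "\<epsilon> \<in> {-1..1::real}" for a \<epsilon>
    proof -
      have "measure P {\<omega>\<in>space P. (SUP h. ereal (G h \<omega> - (1/2) * (h \<bullet> (V *v h)) + \<epsilon> * (a \<bullet> h))) > ereal x}
          \<le> measure P (U (x - 1/lam))"
        using red[OF a e] U_m by (intro P.finite_measure_mono) auto
      also have "\<dots> \<le> A1 * exp (-(x - 1/lam))" using y0[OF yx] unfolding A1_def by simp
      also have "\<dots> = A1 * exp (1/lam) * exp (-x)" by (simp add: exp_diff exp_minus field_simps)
      also have "\<dots> \<le> C8 * exp (-x)" unfolding C8_def by (simp add: distrib_right)
      also have "\<dots> \<le> 1 * exp (- 1 * x\<^sup>2) + C8 * exp (- x)" by simp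
      finally show ?thesis .
    qed
    show "(SUP a\<in>sphere 0 1. SUP \<epsilon>\<in>{-1..1::real}.
              measure P {\<omega>\<in>space P.
                 (SUP h. ereal (G h \<omega> - (1/2) * (h \<bullet> (V *v h)) + \<epsilon> * (a \<bullet> h))) > ereal x})
              \<le> 1 * exp (- 1 * x\<^sup>2) + C8 * exp (- x)"
    proof (rule cSUP_least)
      show "sphere (0::real^'d) 1 \<noteq> {}" by simp
    next
      fix a :: "real^'d" assume a: "a \<in> sphere 0 1"
      show "(SUP \<epsilon>\<in>{-1..1::real}.
              measure P {\<omega>\<in>space P.
                 (SUP h. ereal (G h \<omega> - (1/2) * (h \<bullet> (V *v h)) + \<epsilon> * (a \<bullet> h))) > ereal x})
              \<le> 1 * exp (- 1 * x\<^sup>2) + C8 * exp (- x)"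
      proof (rule cSUP_least)
        show "{-1..1::real} \<noteq> {}" by simp
      next
        fix \<epsilon> :: real assume e: "\<epsilon> \<in> {-1..1}"
        show "measure P {\<omega>\<in>space P.
                 (SUP h. ereal (G h \<omega> - (1/2) * (h \<bullet> (V *v h)) + \<epsilon> * (a \<bullet> h))) > ereal x}
              \<le> 1 * exp (- 1 * x\<^sup>2) + C8 * exp (- x)" by (rule bd[OF a e])
      qed
    qed
  qed
  have part2: "\<forall>k::nat. k > 0 \<longrightarrow>
              (SUP a\<in>sphere 0 1. SUP \<epsilon>\<in>{-1..1::real}.
                 \<integral>\<^sup>+ \<omega>. (e2ennreal (SUP h. ereal (G h \<omega> - (1/2) * (h \<bullet> (V *v h)) + \<epsilon> * (a \<bullet> h)))) ^ k \<partial>P)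
              < \<infinity>"
  proof (intro allI impI)
    fix k :: nat assume k: "0 < k"
    define A2 where "A2 = max A1 (exp y0)"
    have A2: "0 < A2" unfolding A2_def by (simp add: max.strict_coboundedI2)
    have emU: "emeasure P (U y) \<le> ennreal (A2 * exp (-y))" for y
    proof (cases "y0 \<le> y")
      case True
      have "emeasure P (U y) = ennreal (measure P (U y))" by (simp add: P.emeasure_eq_measure)
      also have "\<dots> \<le> ennreal (A1 * exp (-y))" using y0[OF True] unfolding A1_def by (intro ennreal_leI) simp
      also have "\<dots> \<le> ennreal (A2 * exp (-y))" unfolding A2_def by (intro ennreal_leI mult_right_mono) auto
      finally show ?thesis .
    next
      case False
      have "emeasure P (U y) \<le> 1" by (rule P.emeasure_le_1)
      also have "(1::real) \<le> exp (y0 - y)" using False by simp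
      hence "1 \<le> ennreal (exp y0 * exp (-y))" by (simp add: exp_diff exp_minus field_simps)
      also have "ennreal (exp y0 * exp (-y)) \<le> ennreal (A2 * exp (-y))"
        unfolding A2_def by (intro ennreal_leI mult_right_mono) auto
      finally show ?thesis by simp
    qed
    define g where "g n = (real n + 1)^k * (A2 * exp (1/lam)) * exp (-real n)" for n :: nat
    have g0: "0 \<le> g n" for n unfolding g_def using A2 by simp
    have gb: "g n \<le> ((2 * real k)^k * (A2 * exp (1/lam)) * exp (1/2)) * exp (-1/2) ^ n" for n
    proof -
      define t where "t = (real n + 1) / (2 * real k)"
      have t0: "0 \<le> t" unfolding t_def by simp
      have "t \<le> exp t" using exp_ge_add_one_self[of t] by linarith
      hence "t^k \<le> exp t ^ k" using t0 by (intro power_mono) auto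
      also have "\<dots> = exp (real k * t)" by (simp add: exp_of_nat_mult)
      also have "real k * t = (real n + 1) / 2" unfolding t_def using k by simp
      finally have tk: "t^k \<le> exp ((real n + 1) / 2)" .
      have "2 * real k * t = real n + 1" unfolding t_def using k by simp
      hence "(real n + 1)^k = (2 * real k * t)^k" by simp
      also have "\<dots> = (2 * real k)^k * t^k" by (rule power_mult_distrib)
      also have "\<dots> \<le> (2 * real k)^k * exp ((real n + 1) / 2)" using tk by (intro mult_left_mono) auto
      finally have nb: "(real n + 1)^k \<le> (2 * real k)^k * exp ((real n + 1) / 2)" .
      have "g n \<le> (2 * real k)^k * exp ((real n + 1) / 2) * (A2 * exp (1/lam)) * exp (-real n)"
        unfolding g_def using A2 nb by (intro mult_right_mono) auto
      also have "exp ((real n + 1) / 2) * exp (-real n) = exp (1/2) * exp (-1/2) ^ n"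
        by (simp add: exp_add[symmetric] exp_of_nat_mult[symmetric] field_simps)
      hence "(2 * real k)^k * exp ((real n + 1) / 2) * (A2 * exp (1/lam)) * exp (-real n)
          = ((2 * real k)^k * (A2 * exp (1/lam)) * exp (1/2)) * exp (-1/2) ^ n"
        by (metis (no_types, lifting) mult.assoc mult.commute)
      finally show ?thesis .
    qed
    have gs: "summable g"
      by (rule summable_comparison_test'[where g="\<lambda>n. ((2 * real k)^k * (A2 * exp (1/lam)) * exp (1/2)) * exp (-1/2) ^ n"])
         (use gb g0 in \<open>auto intro!: summable_mult summable_geometric\<close>)
    define Bk where "Bk = ennreal (\<Sum>n. g n)"
    have bnd: "(\<integral>\<^sup>+ \<omega>. (e2ennreal (SUP h. ereal (G h \<omega> - (1/2) * (h \<bullet> (V *v h)) + \<epsilon> * (a \<bullet> h)))) ^ k \<partial>P) \<le> Bk"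
      if a: "a \<in> sphere 0 1" and e: "\<epsilon> \<in> {-1..1::real}" for a \<epsilon>
    proof -
      define F where "F \<omega> = (SUP h. ereal (G h \<omega> - (1/2) * (h \<bullet> (V *v h)) + \<epsilon> * (a \<bullet> h)))" for \<omega>
      define S where "S \<omega> = (\<Sum>n. ennreal ((real n + 1)^k) * indicator (U (real n - 1/lam)) \<omega>)" for \<omega>
      have mem: "indicator (U (real n - 1/lam)) \<omega> = (1::ennreal)" if "\<omega> \<in> space P" "ereal (real n) < F \<omega>" for \<omega> n
        using red[OF a e that(1)] that(2) unfolding F_def by simp
      have pw: "(e2ennreal (F \<omega>))^k \<le> S \<omega>" if \<omega>: "\<omega> \<in> space P" for \<omega>
      proof (cases "F \<omega>")
        case (real z)
        show ?thesis
        proof (cases "z \<le> 0")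
          case True thus ?thesis using real k by (simp add: ennreal_neg zero_power)
        next
          case False
          define n where "n = nat \<lceil>z\<rceil> - 1"
          have c1: "1 \<le> \<lceil>z\<rceil>" using False by (simp add: one_le_ceiling)
          hence c2: "1 \<le> nat \<lceil>z\<rceil>" by linarith
          have "real n = real (nat \<lceil>z\<rceil>) - 1" unfolding n_def using c2 by (simp add: of_nat_diff)
          hence rn: "real n = of_int \<lceil>z\<rceil> - 1" using c1 by simp
          have n1: "real n < z" and n2: "z \<le> real n + 1" unfolding rn by linarith+
          have "(e2ennreal (F \<omega>))^k = ennreal (z^k)" using real False by (simp add: ennreal_power)
          also have "\<dots> \<le> ennreal ((real n + 1)^k)" using n2 False by (intro ennreal_leI power_mono) auto
          also have "\<dots> = ennreal ((real n + 1)^k) * indicator (U (real n - 1/lam)) \<omega>"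
            using mem[OF \<omega>, of n] real n1 by simp
          also have "\<dots> \<le> S \<omega>" unfolding S_def
            by (rule order_trans[OF _ sum_le_suminf[OF summableI, of "{n}"]]) (simp only: sum.insert[OF finite.emptyI] empty_iff not_False_eq_True sum.empty add_0_right order_refl, simp, simp)
          finally show ?thesis .
        qed
      next
        case PInf
        have "of_nat N \<le> S \<omega>" for N
        proof -
          have "of_nat N = (\<Sum>n<N. (1::ennreal))" by simp
          also have "\<dots> \<le> (\<Sum>n<N. ennreal ((real n + 1)^k) * indicator (U (real n - 1/lam)) \<omega>)"
          proof (intro sum_mono)
            fix n assume "n \<in> {..<N}"
            have "(1::real) \<le> (real n + 1)^k" by (intro one_le_power) simp
            thus "(1::ennreal) \<le> ennreal ((real n + 1)^k) * indicator (U (real n - 1/lam)) \<omega>"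
              using mem[OF \<omega>, of n] PInf by simp
          qed
          also have "\<dots> \<le> S \<omega>" unfolding S_def by (rule sum_le_suminf[OF summableI]) auto
          finally show ?thesis .
        qed
        hence "(SUP N. of_nat N) \<le> S \<omega>" by (intro SUP_least) auto
        hence "S \<omega> = top" by (simp add: ennreal_SUP_of_nat_eq_top top_unique)
        thus ?thesis by simp
      next
        case MInf thus ?thesis using k by (simp add: e2ennreal_neg zero_power)
      qed
      have "(\<integral>\<^sup>+ \<omega>. (e2ennreal (F \<omega>))^k \<partial>P) \<le> (\<integral>\<^sup>+ \<omega>. S \<omega> \<partial>P)"
        by (intro nn_integral_mono pw)
      also have "\<dots> = (\<Sum>n. \<integral>\<^sup>+ \<omega>. ennreal ((real n + 1)^k) * indicator (U (real n - 1/lam)) \<omega> \<partial>P)"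
        unfolding S_def using U_m by (intro nn_integral_suminf) auto
      also have "\<dots> = (\<Sum>n. ennreal ((real n + 1)^k) * emeasure P (U (real n - 1/lam)))"
        using U_m by (simp add: nn_integral_cmult_indicator)
      also have "\<dots> \<le> (\<Sum>n. ennreal (g n))"
      proof (intro suminf_le summableI)
        fix n
        have "ennreal ((real n + 1)^k) * emeasure P (U (real n - 1/lam))
            \<le> ennreal ((real n + 1)^k) * ennreal (A2 * exp (-(real n - 1/lam)))"
          by (intro mult_left_mono emU) auto
        also have "\<dots> = ennreal (g n)" unfolding g_def using A2
          by (simp add: ennreal_mult'[symmetric] exp_diff exp_minus field_simps)
        finally show "ennreal ((real n + 1)^k) * emeasure P (U (real n - 1/lam)) \<le> ennreal (g n)" .
      qed
      also have "\<dots> = Bk" unfolding Bk_def using g0 gs by (rule suminf_ennreal2)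
      finally show ?thesis unfolding F_def .
    qed
    have "(SUP a\<in>sphere 0 1. SUP \<epsilon>\<in>{-1..1::real}.
                 \<integral>\<^sup>+ \<omega>. (e2ennreal (SUP h. ereal (G h \<omega> - (1/2) * (h \<bullet> (V *v h)) + \<epsilon> * (a \<bullet> h)))) ^ k \<partial>P) \<le> Bk"
      by (intro SUP_least bnd)
    also have "Bk < \<infinity>" unfolding Bk_def by simp
    finally show "(SUP a\<in>sphere 0 1. SUP \<epsilon>\<in>{-1..1::real}.
                 \<integral>\<^sup>+ \<omega>. (e2ennreal (SUP h. ereal (G h \<omega> - (1/2) * (h \<bullet> (V *v h)) + \<epsilon> * (a \<bullet> h)))) ^ k \<partial>P) < \<infinity>" .
  qed
  have C8: "0 < C8" unfolding C8_def using A1 by (simp add: add_nonneg_pos)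
  have K0: "0 < K0" unfolding K0_def using lam by (simp add: add_nonneg_pos)
  show ?thesis
    by (rule exI[of _ 1], rule exI[of _ 1], rule exI[of _ C8], rule exI[of _ K0])
       (use C8 K0 part1 part2 in simp)
qed

end
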